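(* Let $n\ge 6$. Among all cycle barbells $CB(k,a,b)$ (with integers $a,b\ge3$, $k\ge2$) having exactly $n$ vertices, the non-backtracking Kemeny's constant $\mathscr{K}_{nb}$ is maximized at $CB(2,\lceil n/2\rceil,\lfloor n/2\rfloor)$. Moreover, for $n$ even, \[ \mathscr{K}_{nb}(CB(2,n/2,n/2))=\frac{11n^2+14n+2}{4(n+1)}, \] and for $n$ odd, \[ \mathscr{K}_{nb}(CB(2,(n+1)/2,(n-1)/2))=\frac{11n^2+14n+1}{4(n+1)}. \]
   Context: The cycle barbell $CB(k,a,b)$ is the graph obtained from a cycle $C_a$, a path $P_k$ on $k$ vertices and a cycle $C_b$ by identifying one endpoint of the path with a vertex of $C_a$ and the other endpoint with a vertex of $C_b$. It has $a+b+k-2$ vertices and $a+b+k-1$ edges. Kemeny's constant of an irreducible finite Markov chain with transition matrix $P$ whose eigenvalues (with multiplicity) are $1=\rho_1,\rho_2,\dots,\rho_N$ (with $1$ simple) is $\mathscr{K}(P)=\sum_{i=2}^{N}\frac{1}{1-\rho_i}$. $\mathscr{K}_{nb}(G)$ is Kemeny's constant of the non-backtracking random walk on the arcs of $G$ (ordered pairs $(u,v)$ with $\{u,v\}$ an edge), where from $(u,v)$ one moves to $(v,w)$ with probability $1/(\deg(v)-1)$ for each neighbor $w\neq u$ of $v$. *)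

theory Defs
  imports "Jordan_Normal_Form.Char_Poly" "HOL-Library.Product_Lexorder"
begin

text \<open>Vertices of CB(k,a,b) are 0..a+b+k-3.
  Cycle C_a on 0..a-1; path P_k with vertices pv 0 = 0, pv j = a+j-1 (0<j<k);
  cycle C_b on a+k-2 .. a+k-2+b-1, whose vertex a+k-2 is the last path vertex.\<close>

definition cb_path_vertex :: "nat \<Rightarrow> nat \<Rightarrow> nat" where
  "cb_path_vertex a j = (if j = 0 then 0 else a + j - 1)"

definition cb_vertices :: "nat \<Rightarrow> nat \<Rightarrow> nat \<Rightarrow> nat set" where
  "cb_vertices k a b = {..< a + b + k - 2}"

definition cb_edges :: "nat \<Rightarrow> nat \<Rightarrow> nat \<Rightarrow> nat set set" where
  "cb_edges k a b =
     {{i, (i + 1) mod a} | i. i < a}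
   \<union> {{cb_path_vertex a j, cb_path_vertex a (j + 1)} | j. j + 1 < k}
   \<union> {{a + k - 2 + i, a + k - 2 + (i + 1) mod b} | i. i < b}"

definition arcs :: "nat set set \<Rightarrow> (nat \<times> nat) set" where
  "arcs E = {(u, v). {u, v} \<in> E}"

definition gdeg :: "nat set set \<Rightarrow> nat \<Rightarrow> nat" where
  "gdeg E v = card {w. {v, w} \<in> E}"

definition nb_matrix :: "nat set set \<Rightarrow> complex mat" where
  "nb_matrix E = (let as = sorted_list_of_set (arcs E) in
     mat (length as) (length as) (\<lambda>(i, j).
       let (u, v) = as ! i; (x, w) = as ! j in
       if x = v \<and> w \<noteq> u then 1 / of_nat (gdeg E v - 1) else 0))"

definition kemeny :: "complex mat \<Rightarrow> complex" where
  "kemeny P = sum_mset (image_mset (\<lambda>\<rho>. 1 / (1 - \<rho>)) (proots (char_poly P) - {#1#}))"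

definition kemeny_nb :: "nat set set \<Rightarrow> complex" where
  "kemeny_nb E = kemeny (nb_matrix E)"

end

theory Submission
  imports Defs
begin

lemma pderiv_lin: "pderiv [:c, 1:] = (1::complex poly)" by (simp add: pderiv_pCons)

lemma logderiv_prod:
  fixes M :: "complex multiset"
  assumes "z \<notin># M"
  shows "poly (pderiv (\<Prod>x\<in>#M. [:-x, 1:])) z = poly (\<Prod>x\<in>#M. [:-x, 1:]) z * (\<Sum>r\<in>#M. 1 / (z - r))"
  using assms
proof (induction M)
  case empty
  then show ?case by simp
next
  case (add r M)
  then have zr: "z - r \<noteq> 0" by auto
  from add have IH: "poly (pderiv (\<Prod>x\<in>#M. [:-x, 1:])) z = poly (\<Prod>x\<in>#M. [:-x, 1:]) z * (\<Sum>r\<in>#M. 1 / (z - r))" by auto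
  have "poly (pderiv (\<Prod>x\<in>#add_mset r M. [:-x, 1:])) z = poly (pderiv ([:-r,1:] * (\<Prod>x\<in>#M. [:-x, 1:]))) z" by simp
  also have "\<dots> = poly (\<Prod>x\<in>#M. [:-x, 1:]) z + (z - r) * poly (pderiv (\<Prod>x\<in>#M. [:-x, 1:])) z"
    by (simp only: pderiv_mult pderiv_lin poly_add poly_mult) simp
  finally have e3: "poly (pderiv (\<Prod>x\<in>#add_mset r M. [:-x, 1:])) z = poly (\<Prod>x\<in>#M. [:-x, 1:]) z + (z - r) * poly (pderiv (\<Prod>x\<in>#M. [:-x, 1:])) z" .
  have e1: "poly (\<Prod>x\<in>#add_mset r M. [:-x, 1:]) z = (z - r) * poly (\<Prod>x\<in>#M. [:-x, 1:]) z" by (simp add: algebra_simps)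
  have e2: "(\<Sum>r\<in>#add_mset r M. 1 / (z - r)) = 1 / (z - r) + (\<Sum>r\<in>#M. 1 / (z - r))" by simp
  have alg: "\<And>F S r z::complex. z - r \<noteq> 0 \<Longrightarrow> F + (z - r) * (F * S) = (z - r) * F * (1 / (z - r) + S)"
    by (simp add: field_simps)
  show ?case by (simp only: e1 e2 e3 IH alg[OF zr])
qed

lemma sum_proots_logderiv:
  fixes p :: "complex poly"
  assumes "poly p z \<noteq> 0"
  shows "(\<Sum>r\<in>#proots p. 1 / (z - r)) = poly (pderiv p) z / poly p z"
proof -
  have p0: "p \<noteq> 0" using assms by auto
  let ?F = "\<Prod>x\<in>#proots p. [:-x, 1:]"
  have dec: "p = Polynomial.smult (lead_coeff p) ?F" using complex_poly_decompose_multiset[of p] by simp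
  have c0: "lead_coeff p \<noteq> 0" using p0 by simp
  have zn: "z \<notin># proots p" using assms p0 by simp
  have F0: "poly ?F z \<noteq> 0" using assms dec by (metis mult_zero_right poly_smult)
  have "poly (pderiv p) z / poly p z = poly (pderiv ?F) z / poly ?F z"
    apply (subst (1 2) dec) using c0 by (simp add: pderiv_smult)
  also have "\<dots> = poly ?F z * (\<Sum>r\<in>#proots p. 1 / (z - r)) / poly ?F z"
    by (simp only: logderiv_prod[OF zn])
  also have "\<dots> = (\<Sum>r\<in>#proots p. 1 / (z - r))"
    using F0 by (rule nonzero_mult_div_cancel_left)
  finally show ?thesis by simp
qed

definition hpol :: "nat \<Rightarrow> complex poly" where
  "hpol a = monom 1 a - [:1/2:]"

definition gpol :: "nat \<Rightarrow> nat \<Rightarrow> nat \<Rightarrow> complex poly" where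
  "gpol m a b = monom 1 m * hpol a * hpol b - [:1/4:]"

lemma poly_monom_1: "poly (monom (1::complex) m) 1 = 1" by (simp add: poly_monom)
lemma poly_d_monom_1: "poly (pderiv (monom (1::complex) m)) 1 = of_nat m" by (simp add: pderiv_monom poly_monom)
lemma poly_dd_monom_1: "poly (pderiv (pderiv (monom (1::complex) m))) 1 = of_nat m * (of_nat m - 1)"
  by (cases m) (simp_all add: pderiv_monom poly_monom algebra_simps)

lemma hpol_1: "poly (hpol a) 1 = 1/2" by (simp add: hpol_def poly_monom)
lemma hpol_d1: "poly (pderiv (hpol a)) 1 = of_nat a" by (simp add: hpol_def pderiv_diff poly_d_monom_1)
lemma hpol_dd1: "poly (pderiv (pderiv (hpol a))) 1 = of_nat a * (of_nat a - 1)"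
  by (simp add: hpol_def pderiv_diff poly_dd_monom_1)

lemma gpol_1: "poly (gpol m a b) 1 = 0" by (simp add: gpol_def hpol_1 poly_monom)
lemma gpol_d1: "poly (pderiv (gpol m a b)) 1 = of_nat m / 4 + (of_nat a + of_nat b) / 2"
  by (simp add: gpol_def pderiv_diff pderiv_mult hpol_1 hpol_d1 poly_monom_1 poly_d_monom_1 field_simps)
lemma gpol_dd1: "poly (pderiv (pderiv (gpol m a b))) 1 =
   of_nat m * (of_nat m - 1) / 4 + of_nat a * (of_nat a - 1) / 2 + of_nat b * (of_nat b - 1) / 2
   + of_nat m * of_nat a + of_nat m * of_nat b + 2 * of_nat a * of_nat b"
  by (simp add: gpol_def pderiv_diff pderiv_mult pderiv_add hpol_1 hpol_d1 hpol_dd1 poly_monom_1 poly_d_monom_1 poly_dd_monom_1 field_simps)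

lemma hpol_nz: "poly (hpol a) 1 \<noteq> 0" by (simp add: hpol_1)

lemma sum_hpol: "(\<Sum>r\<in>#proots (hpol a). 1 / (1 - r)) = 2 * of_nat a"
  using sum_proots_logderiv[of "hpol a" 1] by (simp add: hpol_1 hpol_d1)

lemma kemeny_from_poly:
  assumes cp: "char_poly P = hpol a * hpol b * gpol m a b" and apos: "a > 0"
  shows "kemeny P = 2 * of_nat a + 2 * of_nat b +
     (of_nat m * (of_nat m - 1) / 4 + of_nat a * (of_nat a - 1) / 2 + of_nat b * (of_nat b - 1) / 2
   + of_nat m * of_nat a + of_nat m * of_nat b + 2 * of_nat a * of_nat b) / (2 * (of_nat m / 4 + (of_nat a + of_nat b) / 2))"
proof -
  have "[:-1, 1:] dvd gpol m a b" using gpol_1 by (simp add: poly_eq_0_iff_dvd)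
  then obtain q where gq: "gpol m a b = [:-1, 1:] * q" by (auto elim: dvdE)
  have d1: "poly (pderiv (gpol m a b)) 1 = poly q 1" unfolding gq by (simp only: pderiv_mult pderiv_lin poly_add poly_mult) simp
  have d2: "poly (pderiv (pderiv (gpol m a b))) 1 = 2 * poly (pderiv q) 1" unfolding gq by (simp only: pderiv_mult pderiv_lin pderiv_add pderiv_1 poly_add poly_mult) simp
  have pos: "of_nat m / 4 + (of_nat a + of_nat b) / 2 \<noteq> (0::complex)" if "a > 0"
  proof -
    have "of_nat m / 4 + (of_nat a + of_nat b) / 2 = (of_real (real m / 4 + (real a + real b) / 2) :: complex)" by simp
    moreover have "real m / 4 + (real a + real b) / 2 > 0" using that by (simp add: add_nonneg_pos)
    ultimately show ?thesis by (metis of_real_eq_0_iff less_irrefl)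
  qed
  have q1: "poly q 1 \<noteq> 0" using d1 gpol_d1 pos[OF apos] by simp
  have q0: "q \<noteq> 0" using q1 by auto
  have h0: "hpol a \<noteq> 0" "hpol b \<noteq> 0" using hpol_nz by (metis poly_0)+
  have "proots (char_poly P) = proots (hpol a) + proots (hpol b) + proots q + {#1#}"
  proof -
    have pl: "proots ([:-1,1:] * q) = add_mset 1 (proots q)"
      by (subst proots_mult) (use q0 in auto)
    have "[:-1,1:] * q \<noteq> 0" using q0 by (simp only: mult_eq_0_iff) simp
    then have "proots (hpol a * hpol b * ([:-1,1:] * q)) = proots (hpol a) + proots (hpol b) + proots ([:-1,1:] * q)"
      using h0 by (simp add: proots_mult)
    then show ?thesis unfolding cp gq pl by simp
  qed
  then have "proots (char_poly P) - {#1#} = proots (hpol a) + proots (hpol b) + proots q" by simp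
  then have "kemeny P = (\<Sum>r\<in>#proots (hpol a). 1 / (1 - r)) + (\<Sum>r\<in>#proots (hpol b). 1 / (1 - r)) + (\<Sum>r\<in>#proots q. 1 / (1 - r))"
    unfolding kemeny_def by simp
  also have "(\<Sum>r\<in>#proots q. 1 / (1 - r)) = poly (pderiv q) 1 / poly q 1" using sum_proots_logderiv[OF q1] .
  finally show ?thesis using d1 d2 gpol_d1 gpol_dd1 sum_hpol by simp
qed

definition matL :: "'a list \<Rightarrow> ('a \<Rightarrow> 'a \<Rightarrow> complex) \<Rightarrow> complex mat" where
  "matL xs F = mat (length xs) (length xs) (\<lambda>(i,j). F (xs!i) (xs!j))"

lemma matL_carrier[simp]: "matL xs F \<in> carrier_mat (length xs) (length xs)"
  by (simp add: matL_def)

lemma matL_index[simp]: "i < length xs \<Longrightarrow> j < length xs \<Longrightarrow> matL xs F $$ (i,j) = F (xs!i) (xs!j)"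
  by (simp add: matL_def)

lemma matL_dims[simp]: "dim_row (matL xs F) = length xs" "dim_col (matL xs F) = length xs"
  by (simp_all add: matL_def)

lemma sum_nth_distinct:
  assumes "distinct xs"
  shows "(\<Sum>l\<in>{0..<length xs}. g (xs!l)) = (\<Sum>s\<in>set xs. g s)"
proof -
  have "bij_betw ((!) xs) {..<length xs} (set xs)" by (rule bij_betw_nth[OF assms]) auto
  then have "(\<Sum>s\<in>set xs. g s) = (\<Sum>l\<in>{..<length xs}. g (xs!l))"
    by (rule sum.reindex_bij_betw[symmetric])
  then show ?thesis by (simp add: atLeast0LessThan)
qed

lemma matL_mult:
  assumes "distinct xs"
  shows "matL xs F * matL xs G = matL xs (\<lambda>s t. \<Sum>m\<in>set xs. F s m * G m t)"
proof (rule eq_matI)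
  fix i j assume i: "i < dim_row (matL xs (\<lambda>s t. \<Sum>m\<in>set xs. F s m * G m t))"
    and j: "j < dim_col (matL xs (\<lambda>s t. \<Sum>m\<in>set xs. F s m * G m t))"
  then have i': "i < length xs" and j': "j < length xs" by auto
  have "(matL xs F * matL xs G) $$ (i, j) = (\<Sum>l\<in>{0..<length xs}. F (xs!i) (xs!l) * G (xs!l) (xs!j))"
    using i' j' by (simp add: scalar_prod_def)
  also have "\<dots> = (\<Sum>m\<in>set xs. F (xs!i) m * G m (xs!j))"
    by (rule sum_nth_distinct[OF assms])
  finally show "(matL xs F * matL xs G) $$ (i, j) = matL xs (\<lambda>s t. \<Sum>m\<in>set xs. F s m * G m t) $$ (i, j)"
    using i' j' by simp
qed auto

lemma det_matL_perm:
  assumes das: "distinct as" and dbs: "distinct bs" and st: "set as = set bs"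
  shows "det (matL as F) = det (matL bs F)"
proof -
  have len: "length as = length bs" using das dbs st by (metis distinct_card)
  define n where "n = length as"
  define Pi :: "complex mat" where "Pi = mat n n (\<lambda>(i,j). if as!i = bs!j then 1 else 0)"
  have Pic: "Pi \<in> carrier_mat n n" by (simp add: Pi_def)
  have bsin: "bs!j \<in> set as" if "j < n" for j using that st len n_def by auto
  have key: "(\<Sum>l\<in>{0..<n}. (if as!l = bs!j then 1 else 0) * g (as!l)) = g (bs!j)" if "j < n" for j and g :: "'a \<Rightarrow> complex"
  proof -
    have "(\<Sum>l\<in>{0..<n}. (if as!l = bs!j then 1 else 0) * g (as!l)) = (\<Sum>s\<in>set as. (if s = bs!j then 1 else 0) * g s)"
      unfolding n_def by (rule sum_nth_distinct[OF das])
    also have "\<dots> = (\<Sum>s\<in>set as. if s = bs!j then g s else 0)" by (rule sum.cong) auto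
    also have "\<dots> = g (bs!j)" using bsin[OF that] by simp
    finally show ?thesis .
  qed
  have key': "(\<Sum>l\<in>{0..<n}. g (as!l) * (if as!l = bs!j then 1 else 0)) = g (bs!j)" if "j < n" for j and g :: "'a \<Rightarrow> complex"
    using key[OF that, of g] by (simp add: mult.commute)
  have A1: "transpose_mat Pi * matL as F * Pi = matL bs F"
  proof (rule eq_matI)
    fix i j assume "i < dim_row (matL bs F)" "j < dim_col (matL bs F)"
    then have i: "i < n" and j: "j < n" using len n_def by auto
    have "(transpose_mat Pi * matL as F) $$ (i, l) = F (bs!i) (as!l)" if l: "l < n" for l
      using i l key[OF i, of "\<lambda>s. F s (as!l)"] by (simp add: Pi_def scalar_prod_def n_def)
    then have "(transpose_mat Pi * matL as F * Pi) $$ (i, j) = (\<Sum>l\<in>{0..<n}. F (bs!i) (as!l) * (if as!l = bs!j then 1 else 0))"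
      using i j by (simp add: Pi_def scalar_prod_def n_def)
    also have "\<dots> = F (bs!i) (bs!j)" using key'[OF j] .
    finally show "(transpose_mat Pi * matL as F * Pi) $$ (i, j) = matL bs F $$ (i, j)" using i j len n_def by simp
  qed (auto simp: Pi_def n_def len)
  have A2: "transpose_mat Pi * Pi = 1\<^sub>m n"
  proof (rule eq_matI)
    fix i j assume "i < dim_row (1\<^sub>m n :: complex mat)" "j < dim_col (1\<^sub>m n :: complex mat)"
    then have i: "i < n" and j: "j < n" by auto
    have "(transpose_mat Pi * Pi) $$ (i, j) = (\<Sum>l\<in>{0..<n}. (if as!l = bs!i then 1 else 0) * (if as!l = bs!j then 1 else 0))"
      using i j by (simp add: Pi_def scalar_prod_def)
    also have "\<dots> = (if bs!i = bs!j then 1 else 0)" using key[OF i, of "\<lambda>s. if s = bs!j then 1 else 0"] by simp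
    also have "\<dots> = 1\<^sub>m n $$ (i,j)" using i j dbs len n_def by (simp add: nth_eq_iff_index_eq)
    finally show "(transpose_mat Pi * Pi) $$ (i, j) = 1\<^sub>m n $$ (i,j)" .
  qed (auto simp: Pi_def)
  have dT: "det (transpose_mat Pi) = det Pi" using det_transpose[OF Pic] .
  have "det (transpose_mat Pi) * det Pi = 1"
    using det_mult[of "transpose_mat Pi" n Pi] Pic A2 by simp
  then have sq: "det Pi * det Pi = 1" using dT by simp
  have "det (matL bs F) = det (transpose_mat Pi) * det (matL as F) * det Pi"
    unfolding A1[symmetric] using Pic
    by (simp add: det_mult[of _ n _] n_def)
  also have "\<dots> = det (matL as F)" using dT sq by (simp add: algebra_simps)
  finally show ?thesis by simp
qed

lemma poly_char_poly_matL:
  assumes dxs: "distinct xs"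
  shows "poly (char_poly (matL xs P)) x = det (matL xs (\<lambda>s t. (if s = t then x else 0) - P s t))"
proof -
  have "poly (char_poly (matL xs P)) x = det (- char_matrix (matL xs P) x)"
    by (rule char_poly_matrix[OF matL_carrier])
  also have "- char_matrix (matL xs P) x = matL xs (\<lambda>s t. (if s = t then x else 0) - P s t)"
  proof (rule eq_matI)
    fix i j assume "i < dim_row (matL xs (\<lambda>s t. (if s = t then x else 0) - P s t))"
      "j < dim_col (matL xs (\<lambda>s t. (if s = t then x else 0) - P s t))"
    then have i: "i < length xs" and j: "j < length xs" by auto
    show "(- char_matrix (matL xs P) x) $$ (i, j) = matL xs (\<lambda>s t. (if s = t then x else 0) - P s t) $$ (i, j)"
      using i j dxs by (simp add: char_matrix_def nth_eq_iff_index_eq)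
  qed (auto simp: char_matrix_def)
  finally show ?thesis .
qed

lemma matL_factor:
  fixes P :: "'a \<Rightarrow> 'a \<Rightarrow> complex" and r :: "'a \<Rightarrow> nat" and x :: complex
  assumes dxs: "distinct xs"
    and x0: "x \<noteq> 0"
    and H1: "\<And>s. s \<in> set xs \<Longrightarrow> 1 \<le> r s"
    and H2: "\<And>s. s \<in> set xs \<Longrightarrow> 1 < r s \<Longrightarrow> nxt s \<in> set xs \<and> r (nxt s) = r s - 1 \<and> e (nxt s) = e s
               \<and> (\<forall>t\<in>set xs. P s t = (if t = nxt s then 1 else 0))"
    and H3: "\<And>s. s \<in> set xs \<Longrightarrow> r s = 1 \<Longrightarrow> e s = s"
  shows "matL xs (\<lambda>s t. (if s = t then x else 0) - P s t)
       = matL xs (\<lambda>s t. (if s = t then x else 0) - (if 1 < r s \<and> t = nxt s then 1 else 0))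
       * matL xs (\<lambda>s t. (if s = t then 1 else 0) - (inverse x) ^ r s * P (e s) t)"
proof -
  let ?Q = "\<lambda>s t. (inverse x) ^ r s * P (e s) t"
  have "(\<Sum>m\<in>set xs. ((if s = m then x else 0) - (if 1 < r s \<and> m = nxt s then 1 else 0)) *
            ((if m = t then 1 else 0) - ?Q m t)) = (if s = t then x else 0) - P s t"
    if s: "s \<in> set xs" and t: "t \<in> set xs" for s t
  proof -
    have split: "(\<Sum>m\<in>set xs. ((if s = m then x else 0) - (if 1 < r s \<and> m = nxt s then 1 else 0)) *
            ((if m = t then 1 else 0) - ?Q m t)) =
          (\<Sum>m\<in>set xs. if s = m then x * ((if m = t then 1 else 0) - ?Q m t) else 0)
          - (\<Sum>m\<in>set xs. if 1 < r s \<and> m = nxt s then ((if m = t then 1 else 0) - ?Q m t) else 0)"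
      unfolding sum_subtractf[symmetric] by (rule sum.cong) (auto simp: algebra_simps)
    have s1: "(\<Sum>m\<in>set xs. if s = m then x * ((if m = t then 1 else 0) - ?Q m t) else 0)
        = x * ((if s = t then 1 else 0) - ?Q s t)"
      using s by (simp only: sum.delta' finite_set if_True)
    show ?thesis
    proof (cases "1 < r s")
      case True
      from H2[OF s True] have n: "nxt s \<in> set xs" "r (nxt s) = r s - 1" "e (nxt s) = e s"
        and Ps: "P s t = (if t = nxt s then 1 else 0)" using t by auto
      have s2: "(\<Sum>m\<in>set xs. if 1 < r s \<and> m = nxt s then ((if m = t then 1 else 0) - ?Q m t) else 0)
          = (if nxt s = t then 1 else 0) - ?Q (nxt s) t" using True n(1)
        by (simp add: sum.delta')
      obtain k where k: "r s = Suc k" using True by (cases "r s") auto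
      have rk: "r (nxt s) = k" using n(2) k by simp
      have eq: "?Q (nxt s) t = x * ?Q s t"
      proof -
        have "x * ?Q s t = (x * inverse x) * (inverse x ^ k * P (e s) t)" unfolding k by (simp only: power_Suc mult.assoc)
        also have "\<dots> = inverse x ^ k * P (e s) t" using x0 by simp
        finally have "x * ?Q s t = inverse x ^ k * P (e s) t" .
        then show ?thesis using rk n(3) by (simp only:)
      qed
      show ?thesis unfolding split s1 s2 Ps eq
        by (cases "t = nxt s"; cases "s = t") (simp_all add: right_diff_distrib)
    next
      case False
      then have r1: "r s = 1" using H1[OF s] by simp
      have s2: "(\<Sum>m\<in>set xs. if 1 < r s \<and> m = nxt s then ((if m = t then 1 else 0) - ?Q m t) else 0) = 0"
        using False by simp
      show ?thesis unfolding split s1 s2 using r1 H3[OF s r1] x0 by (simp add: algebra_simps)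
    qed
  qed
  then show ?thesis
    unfolding matL_mult[OF dxs]
    unfolding matL_def by (intro cong_mat refl) (auto)
qed

lemma det_matL_rank:
  fixes G :: "'a \<Rightarrow> 'a \<Rightarrow> complex" and r :: "'a \<Rightarrow> nat"
  assumes dxs: "distinct xs"
    and diag: "\<And>s. s \<in> set xs \<Longrightarrow> G s s = x"
    and off: "\<And>s t. s \<in> set xs \<Longrightarrow> t \<in> set xs \<Longrightarrow> s \<noteq> t \<Longrightarrow> G s t \<noteq> 0 \<Longrightarrow> r t < r s"
  shows "det (matL xs G) = x ^ length xs"
proof -
  define n where "n = length xs"
  let ?A = "matL xs G"
  let ?f = "\<lambda>i. r (xs!i)"
  have zero: "(\<Prod>i = 0..<n. ?A $$ (i, p i)) = 0" if p: "p permutes {0..<n}" and np: "p \<noteq> id" for p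
  proof -
    from np obtain i0 where "p i0 \<noteq> i0" by (auto simp: fun_eq_iff)
    then obtain i where pi: "p i \<noteq> i" and imin: "\<And>i'. p i' \<noteq> i' \<Longrightarrow> ?f i \<le> ?f i'"
      using ex_has_least_nat[of "\<lambda>i. p i \<noteq> i" i0 ?f] by blast
    have iN: "i < n" using pi p permutes_not_in by fastforce
    define j where "j = p i"
    have jN: "j < n" using iN p unfolding j_def by (simp add: permutes_in_image)
    have pj: "p j \<noteq> j" using pi p unfolding j_def by (metis permutes_inj injD)
    have pjN: "p j < n" using jN p by (simp add: permutes_in_image)
    have "?A $$ (i, p i) = 0 \<or> ?A $$ (j, p j) = 0"
    proof (rule ccontr)
      assume "\<not> ?thesis"
      then have a1: "G (xs!i) (xs!j) \<noteq> 0" and a2: "G (xs!j) (xs!(p j)) \<noteq> 0"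
        using iN jN pjN unfolding j_def n_def by auto
      have "xs!i \<noteq> xs!j" using pi iN jN dxs unfolding j_def n_def by (simp add: nth_eq_iff_index_eq)
      then have "?f j < ?f i" using off a1 iN jN unfolding n_def by auto
      moreover have "?f i \<le> ?f j" using imin[OF pj] .
      ultimately show False by simp
    qed
    then show ?thesis using iN jN by (metis atLeastLessThan_iff le0 prod_zero_iff finite_atLeastLessThan j_def)
  qed
  have "det ?A = (\<Sum>p \<in> {p. p permutes {0..<n}}. signof p * (\<Prod>i = 0..<n. ?A $$ (i, p i)))"
    unfolding n_def by (rule det_def'[OF matL_carrier])
  also have "\<dots> = (\<Sum>p \<in> {id}. signof p * (\<Prod>i = 0..<n. ?A $$ (i, p i)))"
  proof (rule sum.mono_neutral_right)
    show "finite {p. p permutes {0..<n}}" by (simp add: finite_permutations)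
    show "{id} \<subseteq> {p. p permutes {0..<n}}" by (simp add: permutes_id)
    show "\<forall>p\<in>{p. p permutes {0..<n}} - {id}. signof p * (\<Prod>i = 0..<n. ?A $$ (i, p i)) = 0"
      using zero by auto
  qed
  also have "\<dots> = x ^ n" using diag unfolding n_def by (simp add: nth_mem)
  finally show ?thesis unfolding n_def .
qed

lemma det_matL_block:
  fixes G :: "'a \<Rightarrow> 'a \<Rightarrow> complex"
  assumes d: "distinct (js @ rs)"
    and col: "\<And>s t. s \<in> set (js @ rs) \<Longrightarrow> t \<in> set rs \<Longrightarrow> G s t = (if s = t then 1 else 0)"
  shows "det (matL (js @ rs) G) = det (matL js G)"
proof -
  let ?C = "mat (length rs) (length js) (\<lambda>(i,j). G (rs!i) (js!j))"
  have eq: "matL (js @ rs) G = four_block_mat (matL js G) (0\<^sub>m (length js) (length rs)) ?C (1\<^sub>m (length rs))"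
  proof (rule eq_matI)
    fix i j assume "i < dim_row (four_block_mat (matL js G) (0\<^sub>m (length js) (length rs)) ?C (1\<^sub>m (length rs)))"
       "j < dim_col (four_block_mat (matL js G) (0\<^sub>m (length js) (length rs)) ?C (1\<^sub>m (length rs)))"
    then have i: "i < length js + length rs" and j: "j < length js + length rs" by auto
    show "matL (js @ rs) G $$ (i, j) = four_block_mat (matL js G) (0\<^sub>m (length js) (length rs)) ?C (1\<^sub>m (length rs)) $$ (i, j)"
    proof -
      have L: "matL (js @ rs) G $$ (i, j) = G ((js @ rs)!i) ((js @ rs)!j)" using i j by simp
      show ?thesis
      proof (cases "j < length js")
        case True
        then show ?thesis using i j L by (auto simp: nth_append)
      next
        case False
        then have tj: "(js @ rs)!j = rs!(j - length js)" "rs!(j - length js) \<in> set rs" using j by (auto simp: nth_append)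
        have si: "(js @ rs)!i \<in> set (js @ rs)" using i by (metis length_append nth_mem)
        have ij: "((js @ rs)!i = (js @ rs)!j) = (i = j)" using nth_eq_iff_index_eq[OF d] i j by simp
        have tj2: "(js @ rs)!j \<in> set rs" using tj by simp
        have G: "G ((js @ rs)!i) ((js @ rs)!j) = (if i = j then 1 else 0)"
          using col[OF si tj2] ij by simp
        show ?thesis using False i j L G by (auto simp: nth_append)
      qed
    qed
  qed auto
  have "det (four_block_mat (matL js G) (0\<^sub>m (length js) (length rs)) ?C (1\<^sub>m (length rs))) = det (matL js G) * det (1\<^sub>m (length rs) :: complex mat)"
    by (rule det_four_block_mat_upper_right_zero) auto
  then show ?thesis using eq by simp
qed

lemma det_expand0:
  "det (mat (Suc n) (Suc n) f) = (\<Sum>j<Suc n. (if f (0, j) = 0 then 0 else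
      (-1)^j * f (0, j) * det (mat n n (\<lambda>(i', j'). f (Suc i', if j' < j then j' else Suc j')))))"
proof -
  have A: "mat (Suc n) (Suc n) f \<in> carrier_mat (Suc n) (Suc n)" by simp
  have e: "mat n n (\<lambda>(i', j'). mat (Suc n) (Suc n) f $$ (Suc i', if j' < x then j' else Suc j'))
     = mat n n (\<lambda>(i', j'). f (Suc i', if j' < x then j' else Suc j'))" if "x < Suc n" for x
    by (rule eq_matI) auto
  show ?thesis
    apply (subst laplace_expansion_row[OF A, of 0], simp)
    apply (rule sum.cong[OF refl])
    apply (auto simp: cofactor_def mat_delete_def e)
    done
qed

lemma det_mat0: "det (mat 0 0 f) = (1::'a::comm_ring_1)"
  by (simp add: det_def)

lemma if_zero_cancel: "(if c = 0 then 0 else (d::'a::comm_ring_1) * c * X) = d * c * X" by simp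

lemma det6: "det (mat (Suc (Suc (Suc (Suc (Suc (Suc 0)))))) (Suc (Suc (Suc (Suc (Suc (Suc 0)))))) (\<lambda>(i,j). [[1 - al, 0, - al, 0, 0, 0],
                             [0, 1 - al, - al, 0, 0, 0],
                             [0, 0, 1, -p, -p, 0],
                             [0, 0, 0, 1 - be, 0, -be],
                             [0, 0, 0, 0, 1 - be, -be],
                             [-p, -p, 0, 0, 0, 1 :: complex]] ! i ! j))
     = (1-al)^2*(1-be)^2 - 4*p^2*al*be*(1-al)*(1-be)"
  apply (simp add: det_expand0 sum.lessThan_Suc det_mat0 if_zero_cancel)
  apply (simp add: algebra_simps power2_eq_square)
  done

locale cbl =
  fixes k a b :: nat
  assumes a3: "a \<ge> 3" and b3: "b \<ge> 3" and k2: "k \<ge> 2"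
begin

definition w :: nat where "w = a + k - 2"

definition L :: "nat \<Rightarrow> nat" where
  "L c = (if c = 0 \<or> c = 1 then a else if c = 3 \<or> c = 4 then b else k - 1)"

definition W :: "nat \<Rightarrow> nat \<Rightarrow> nat" where
  "W c i = (if c = 0 then (if i < a then i else 0)
       else if c = 1 then (if i = 0 then 0 else a - i)
       else if c = 2 then cb_path_vertex a i
       else if c = 3 then (if i < b then w + i else w)
       else if c = 4 then (if i = 0 then w else w + b - i)
       else cb_path_vertex a (k - 1 - i))"

definition arc :: "nat \<Rightarrow> nat \<Rightarrow> nat \<times> nat" where
  "arc c i = (W c i, W c (Suc i))"

lemma W_simps:
  "W 0 i = (if i < a then i else 0)"
  "W (Suc 0) i = (if i = 0 then 0 else a - i)"
  "W 2 i = cb_path_vertex a i"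
  "W 3 i = (if i < b then w + i else w)"
  "W 4 i = (if i = 0 then w else w + b - i)"
  "W 5 i = cb_path_vertex a (k - 1 - i)"
  by (simp_all add: W_def)

lemma L_simps: "L 0 = a" "L (Suc 0) = a" "L 2 = k - 1" "L 3 = b" "L 4 = b" "L 5 = k - 1"
  by (simp_all add: L_def)

lemma six_cases: "c < 6 \<Longrightarrow> c = 0 \<or> c = 1 \<or> c = 2 \<or> c = 3 \<or> c = 4 \<or> c = (5::nat)" by auto

lemma arc_inj:
  assumes c: "c < 6" and d: "d < 6" and i: "i < L c" and j: "j < L d" and eq: "arc c i = arc d j"
  shows "c = d \<and> i = j"
  using six_cases[OF c] six_cases[OF d] i j eq a3 b3 k2
  by (auto simp: arc_def W_def L_def w_def cb_path_vertex_def split: if_splits)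

lemma mod_suc: "i < n \<Longrightarrow> Suc i mod n = (if Suc i < n then Suc i else 0)"
  by (auto simp: mod_if)

abbreviation E where "E \<equiv> cb_edges k a b"

lemma edge_cases:
  "{u, v} \<in> E \<longleftrightarrow>
     (\<exists>i<a. {u, v} = {i, (i + 1) mod a})
   \<or> (\<exists>j. j + 1 < k \<and> {u, v} = {cb_path_vertex a j, cb_path_vertex a (j + 1)})
   \<or> (\<exists>i<b. {u, v} = {a + k - 2 + i, a + k - 2 + (i + 1) mod b})"
  unfolding cb_edges_def by blast

lemma arc_in_E:
  assumes c: "c < 6" and i: "i < L c"
  shows "{fst (arc c i), snd (arc c i)} \<in> E"
proof -
  have "c = 0 \<or> c = 1 \<or> c = 2 \<or> c = 3 \<or> c = 4 \<or> c = 5" using six_cases[OF c] by simp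
  then show ?thesis
  proof (elim disjE)
    assume c0: "c = 0"
    then have "i < a" using i by (simp add: L_simps)
    then show ?thesis unfolding edge_cases using c0
      by (intro disjI1 exI[of _ i]) (auto simp: arc_def W_simps mod_suc)
  next
    assume c1: "c = 1"
    then have ia: "i < a" using i by (simp add: L_def)
    show ?thesis unfolding edge_cases
    proof (intro disjI1 exI[of _ "a - 1 - i"] conjI)
      show "a - 1 - i < a" using ia by simp
      show "{fst (arc c i), snd (arc c i)} = {a - 1 - i, (a - 1 - i + 1) mod a}"
        using c1 ia a3 by (auto simp: arc_def W_def mod_suc)
    qed
  next
    assume c2: "c = 2"
    then have "i + 1 < k" using i k2 by (simp add: L_simps)
    then show ?thesis unfolding edge_cases using c2
      by (intro disjI2 disjI1 exI[of _ i]) (auto simp: arc_def W_simps)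
  next
    assume c3: "c = 3"
    then have "i < b" using i by (simp add: L_simps)
    then show ?thesis unfolding edge_cases using c3
      by (intro disjI2 disjI2 exI[of _ i]) (auto simp: arc_def W_simps mod_suc w_def)
  next
    assume c4: "c = 4"
    then have ib: "i < b" using i by (simp add: L_simps)
    show ?thesis unfolding edge_cases
    proof (intro disjI2 disjI2 exI[of _ "b - 1 - i"] conjI)
      show "b - 1 - i < b" using ib by simp
      show "{fst (arc c i), snd (arc c i)} = {a + k - 2 + (b - 1 - i), a + k - 2 + (b - 1 - i + 1) mod b}"
        using c4 ib b3 by (auto simp: arc_def W_simps mod_suc w_def)
    qed
  next
    assume c5: "c = 5"
    then have ik: "i + 1 < k" using i k2 by (simp add: L_simps)
    have "k - 2 - i + 1 < k \<and> {fst (arc c i), snd (arc c i)} = {cb_path_vertex a (k - 2 - i), cb_path_vertex a (k - 2 - i + 1)}"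
      using c5 ik by (auto simp: arc_def W_simps Suc_diff_Suc numeral_2_eq_2)
    then show ?thesis unfolding edge_cases by blast
  qed
qed

lemma E_arc:
  assumes "{u, v} \<in> E"
  shows "\<exists>c i. c < 6 \<and> i < L c \<and> arc c i = (u, v)"
proof -
  from assms[unfolded edge_cases] show ?thesis
  proof (elim disjE exE conjE)
    fix i assume i: "i < a" and e: "{u, v} = {i, (i + 1) mod a}"
    from e have "(u = i \<and> v = (i + 1) mod a) \<or> (u = (i + 1) mod a \<and> v = i)" by (auto simp: doubleton_eq_iff)
    then show ?thesis
    proof
      assume "u = i \<and> v = (i + 1) mod a"
      then show ?thesis using i by (intro exI[of _ 0] exI[of _ i]) (auto simp: arc_def W_simps L_simps mod_suc)
    next
      assume "u = (i + 1) mod a \<and> v = i"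
      then show ?thesis using i a3 by (intro exI[of _ 1] exI[of _ "a - 1 - i"]) (auto simp: arc_def W_def L_def mod_suc)
    qed
  next
    fix j assume j: "j + 1 < k" and e: "{u, v} = {cb_path_vertex a j, cb_path_vertex a (j + 1)}"
    from e have "(u = cb_path_vertex a j \<and> v = cb_path_vertex a (j + 1)) \<or> (u = cb_path_vertex a (j + 1) \<and> v = cb_path_vertex a j)"
      by (auto simp: doubleton_eq_iff)
    then show ?thesis
    proof
      assume "u = cb_path_vertex a j \<and> v = cb_path_vertex a (j + 1)"
      then show ?thesis using j by (intro exI[of _ 2] exI[of _ j]) (auto simp: arc_def W_simps L_simps)
    next
      assume "u = cb_path_vertex a (j + 1) \<and> v = cb_path_vertex a j"
      then show ?thesis using j by (intro exI[of _ 5] exI[of _ "k - 2 - j"]) (auto simp: arc_def W_simps L_simps Suc_diff_Suc numeral_2_eq_2)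
    qed
  next
    fix i assume i: "i < b" and e: "{u, v} = {a + k - 2 + i, a + k - 2 + (i + 1) mod b}"
    from e have "(u = w + i \<and> v = w + (i + 1) mod b) \<or> (u = w + (i + 1) mod b \<and> v = w + i)" by (auto simp: doubleton_eq_iff w_def)
    then show ?thesis
    proof
      assume "u = w + i \<and> v = w + (i + 1) mod b"
      then show ?thesis using i by (intro exI[of _ 3] exI[of _ i]) (auto simp: arc_def W_simps L_simps mod_suc)
    next
      assume "u = w + (i + 1) mod b \<and> v = w + i"
      then show ?thesis using i b3 by (intro exI[of _ 4] exI[of _ "b - 1 - i"]) (auto simp: arc_def W_simps L_simps mod_suc)
    qed
  qed
qed

lemma arcs_E: "arcs E = {arc c i | c i. c < 6 \<and> i < L c}"
proof -
  have "p \<in> arcs E \<longleftrightarrow> p \<in> {arc c i | c i. c < 6 \<and> i < L c}" for p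
  proof
    assume "p \<in> arcs E"
    then obtain u v where p: "p = (u, v)" and uv: "{u, v} \<in> E" unfolding arcs_def by auto
    obtain c i where ci: "c < 6" "i < L c" "arc c i = (u, v)" using E_arc[OF uv] by blast
    show "p \<in> {arc c i | c i. c < 6 \<and> i < L c}" unfolding p mem_Collect_eq
      by (rule exI[of _ c], rule exI[of _ i]) (use ci in simp)
  next
    assume "p \<in> {arc c i | c i. c < 6 \<and> i < L c}"
    then obtain c i where ci: "c < 6" "i < L c" "p = arc c i" by blast
    have "{fst (arc c i), snd (arc c i)} \<in> E" by (rule arc_in_E[OF ci(1,2)])
    then show "p \<in> arcs E" unfolding arcs_def ci(3) by (simp add: case_prod_beta)
  qed
  then show ?thesis by blast
qed

definition rv :: "nat \<Rightarrow> nat" where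
  "rv c = (if c = 0 then 1 else if c = 1 then 0 else if c = 2 then 5 else if c = 5 then 2 else if c = 3 then 4 else 3)"

lemma rv_simps: "rv 0 = 1" "rv (Suc 0) = 0" "rv 2 = 5" "rv 3 = 4" "rv 4 = 3" "rv 5 = 2"
  by (simp_all add: rv_def)

lemma L_pos: "c < 6 \<Longrightarrow> 0 < L c"
  using a3 b3 k2 by (auto simp: L_def)

lemma L_rv: "c < 6 \<Longrightarrow> L (rv c) = L c"
  using six_cases[of c] by (auto simp: L_def rv_def)

lemma rv_lt: "c < 6 \<Longrightarrow> rv c < 6"
  by (simp add: rv_def)

lemma W_rv: assumes c: "c < 6" and j: "j \<le> L c" shows "W (rv c) j = W c (L c - j)"
  using six_cases[OF c] j a3 b3 k2
  by (elim disjE) (auto simp: W_simps L_simps rv_simps cb_path_vertex_def)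

lemma W_pos:
  assumes c: "c < 6" and d: "d < 6" and m: "0 < m" "m < L c" and j: "j \<le> L d" and eq: "W d j = W c m"
  shows "(d = c \<and> j = m) \<or> (d = rv c \<and> j = L c - m)"
  using six_cases[OF c] six_cases[OF d] m j eq a3 b3 k2
  by (auto simp: W_def L_def rv_def w_def cb_path_vertex_def split: if_splits)

lemma W_start: "W 0 0 = 0" "W (Suc 0) 0 = 0" "W 2 0 = 0" "W 3 0 = w" "W 4 0 = w" "W 5 0 = w"
  using k2 by (simp_all add: W_simps cb_path_vertex_def w_def)

lemma W5_one: "W 5 1 = cb_path_vertex a (k - 2)"
proof -
  have "k - 1 - 1 = k - 2" by simp
  then show ?thesis by (simp add: W_simps)
qed

lemma W_one: "W 0 1 = 1" "W (Suc 0) 1 = a - 1" "W 2 1 = a" "W 3 1 = w + 1" "W 4 1 = w + b - 1"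
   "W 5 1 = cb_path_vertex a (k - 2)"
  using a3 b3 k2 W5_one by (simp_all add: W_simps cb_path_vertex_def w_def)

lemma W_last: "W 0 (a - 1) = a - 1" "W (Suc 0) (a - 1) = 1" "W 2 (k - 2) = cb_path_vertex a (k - 2)"
   "W 3 (b - 1) = w + b - 1" "W 4 (b - 1) = w + 1" "W 5 (k - 2) = a"
  using a3 b3 k2 by (simp_all add: W_simps cb_path_vertex_def w_def)

lemma W_end: "W 0 a = 0" "W (Suc 0) a = 0" "W 2 (k - 1) = w" "W 3 b = w" "W 4 b = w" "W 5 (k - 1) = 0"
  using a3 b3 k2 by (simp_all add: W_simps cb_path_vertex_def w_def)

lemma w_pos: "0 < w" using a3 k2 by (simp add: w_def)

lemma W_zero: assumes d: "d < 6" and j: "j < L d" and eq: "W d j = 0" shows "j = 0 \<and> d \<le> 2"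
  using six_cases[OF d] j eq a3 b3 k2
  by (elim disjE) (auto simp: W_simps L_simps w_def cb_path_vertex_def split: if_splits)

lemma W_w: assumes d: "d < 6" and j: "j < L d" and eq: "W d j = w" shows "j = 0 \<and> 3 \<le> d"
  using six_cases[OF d] j eq a3 b3 k2
  by (elim disjE) (auto simp: W_simps L_simps w_def cb_path_vertex_def split: if_splits)

lemma W_distinct2: assumes c: "c < 6" and m: "0 < m" "m < L c" shows "W c (Suc m) \<noteq> W c (m - 1)"
  using six_cases[OF c] m a3 b3 k2
  by (elim disjE) (auto simp: W_simps L_simps w_def cb_path_vertex_def split: if_splits)

definition nbs :: "nat \<Rightarrow> nat set" where "nbs v = {y. (v, y) \<in> arcs E}"

lemma nbs_alt: "nbs v = {y. \<exists>d j. d < 6 \<and> j < L d \<and> W d j = v \<and> W d (Suc j) = y}"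
  unfolding nbs_def arcs_E arc_def by auto

lemma gdeg_nbs: "gdeg E v = card (nbs v)"
  unfolding gdeg_def nbs_def arcs_def by simp

lemma nbs_interior:
  assumes c: "c < 6" and m: "0 < m" "m < L c"
  shows "nbs (W c m) = {W c (Suc m), W c (m - 1)}"
proof -
  have "y \<in> nbs (W c m) \<longleftrightarrow> y = W c (Suc m) \<or> y = W c (m - 1)" for y
  proof
    assume "y \<in> nbs (W c m)"
    then obtain d j where d: "d < 6" and j: "j < L d" and eq: "W d j = W c m" and y: "W d (Suc j) = y"
      unfolding nbs_alt mem_Collect_eq by blast
    from W_pos[OF c d m j[THEN less_imp_le] eq] show "y = W c (Suc m) \<or> y = W c (m - 1)"
    proof
      assume "d = c \<and> j = m" then show ?thesis using y by simp
    next
      assume h: "d = rv c \<and> j = L c - m"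
      then have "W d (Suc j) = W c (L c - Suc j)" using W_rv[OF c, of "Suc j"] j L_rv[OF c] by simp
      also have "L c - Suc j = m - 1" using h m by simp
      finally show ?thesis using y by simp
    qed
  next
    assume "y = W c (Suc m) \<or> y = W c (m - 1)"
    then show "y \<in> nbs (W c m)"
    proof
      assume y: "y = W c (Suc m)"
      show ?thesis unfolding nbs_alt mem_Collect_eq
        by (intro exI[of _ c] exI[of _ m]) (use c m y in auto)
    next
      assume y: "y = W c (m - 1)"
      have "W (rv c) (L c - m) = W c m" using W_rv[OF c, of "L c - m"] m by simp
      moreover have "W (rv c) (Suc (L c - m)) = W c (m - 1)" using W_rv[OF c, of "Suc (L c - m)"] m
        by (simp add: Suc_diff_le)
      moreover have "L c - m < L (rv c)" using L_rv[OF c] m by simp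
      ultimately show ?thesis unfolding nbs_alt mem_Collect_eq using rv_lt[OF c] y
        by (intro exI[of _ "rv c"] exI[of _ "L c - m"]) auto
    qed
  qed
  then show ?thesis by blast
qed

lemma nbs_0: "nbs 0 = {1, a - 1, a}"
proof -
  have "y \<in> nbs 0 \<longleftrightarrow> y = 1 \<or> y = a - 1 \<or> y = a" for y
  proof
    assume "y \<in> nbs 0"
    then obtain d j where d: "d < 6" and j: "j < L d" and eq: "W d j = 0" and y: "W d (Suc j) = y"
      unfolding nbs_alt mem_Collect_eq by blast
    from W_zero[OF d j eq] have "j = 0" "d = 0 \<or> d = 1 \<or> d = 2" by auto
    then show "y = 1 \<or> y = a - 1 \<or> y = a" using y W_one by auto
  next
    assume y: "y = 1 \<or> y = a - 1 \<or> y = a"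
    have L0: "0 < L 0" "0 < L (Suc 0)" "0 < L 2" using L_pos by auto
    show "y \<in> nbs 0" using y
    proof (elim disjE)
      assume "y = 1" then show ?thesis unfolding nbs_alt mem_Collect_eq using W_one W_start L0
        by (intro exI[of _ "0::nat"] exI[of _ "0::nat"]) auto
    next
      assume "y = a - 1" then show ?thesis unfolding nbs_alt mem_Collect_eq using W_one W_start L0
        by (intro exI[of _ "1::nat"] exI[of _ "0::nat"]) auto
    next
      assume "y = a" then show ?thesis unfolding nbs_alt mem_Collect_eq using W_one W_start L0
        by (intro exI[of _ "2::nat"] exI[of _ "0::nat"]) auto
    qed
  qed
  then show ?thesis by blast
qed


lemma nbs_w: "nbs w = {w + 1, w + b - 1, cb_path_vertex a (k - 2)}"
proof -
  have "y \<in> nbs w \<longleftrightarrow> y = w + 1 \<or> y = w + b - 1 \<or> y = cb_path_vertex a (k - 2)" for y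
  proof
    assume "y \<in> nbs w"
    then obtain d j where d: "d < 6" and j: "j < L d" and eq: "W d j = w" and y: "W d (Suc j) = y"
      unfolding nbs_alt mem_Collect_eq by blast
    from W_w[OF d j eq] have "j = 0" "d = 3 \<or> d = 4 \<or> d = 5" using d by auto
    then show "y = w + 1 \<or> y = w + b - 1 \<or> y = cb_path_vertex a (k - 2)" using y W_one by auto
  next
    assume y: "y = w + 1 \<or> y = w + b - 1 \<or> y = cb_path_vertex a (k - 2)"
    have L0: "0 < L 3" "0 < L 4" "0 < L 5" using L_pos by auto
    show "y \<in> nbs w" using y
    proof (elim disjE)
      assume "y = w + 1" then show ?thesis unfolding nbs_alt mem_Collect_eq using W_one W_start L0
        by (intro exI[of _ "3::nat"] exI[of _ "0::nat"]) auto
    next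
      assume "y = w + b - 1" then show ?thesis unfolding nbs_alt mem_Collect_eq using W_one W_start L0
        by (intro exI[of _ "4::nat"] exI[of _ "0::nat"]) auto
    next
      assume "y = cb_path_vertex a (k - 2)" then show ?thesis unfolding nbs_alt mem_Collect_eq using W_one W_start L0
        by (intro exI[of _ "5::nat"] exI[of _ "0::nat"]) auto
    qed
  qed
  then show ?thesis by blast
qed

lemma gdeg_0: "gdeg E 0 = 3"
  unfolding gdeg_nbs nbs_0 using a3 by auto

lemma gdeg_w: "gdeg E w = 3"
proof -
  have "cb_path_vertex a (k - 2) < w" using a3 k2 by (auto simp: cb_path_vertex_def w_def)
  then show ?thesis unfolding gdeg_nbs nbs_w using b3 by auto
qed

lemma gdeg_interior: assumes c: "c < 6" and m: "0 < m" "m < L c" shows "gdeg E (W c m) = 2"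
  unfolding gdeg_nbs nbs_interior[OF c m] using W_distinct2[OF c m] by simp

lemma W_end_cases: "c < 6 \<Longrightarrow> W c (L c) = 0 \<or> W c (L c) = w"
  using six_cases[of c] W_end by (auto simp: L_simps)

lemma gdeg_end: "c < 6 \<Longrightarrow> gdeg E (W c (L c)) = 3"
  using W_end_cases gdeg_0 gdeg_w by metis

end

definition Pnb :: "nat set set \<Rightarrow> nat \<times> nat \<Rightarrow> nat \<times> nat \<Rightarrow> complex" where
  "Pnb G s t = (let (u, v) = s; (x, w) = t in if x = v \<and> w \<noteq> u then 1 / of_nat (gdeg G v - 1) else 0)"

lemma nb_matrix_matL: "nb_matrix G = matL (sorted_list_of_set (arcs G)) (Pnb G)"
  unfolding nb_matrix_def matL_def Pnb_def Let_def by simp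

context cbl begin

lemma Pnb_arc: "Pnb E (arc c i) (arc d j) =
   (if W d j = W c (Suc i) \<and> W d (Suc j) \<noteq> W c i then 1 / of_nat (gdeg E (W c (Suc i)) - 1) else 0)"
  by (simp add: Pnb_def arc_def)

lemma trans_int:
  assumes c: "c < 6" and i: "Suc i < L c" and d: "d < 6" and j: "j < L d"
  shows "Pnb E (arc c i) (arc d j) = (if d = c \<and> j = Suc i then 1 else 0)"
proof -
  have g: "gdeg E (W c (Suc i)) = 2" using gdeg_interior[OF c _ i] by simp
  have "(W d j = W c (Suc i) \<and> W d (Suc j) \<noteq> W c i) \<longleftrightarrow> (d = c \<and> j = Suc i)"
  proof
    assume h: "W d j = W c (Suc i) \<and> W d (Suc j) \<noteq> W c i"
    from W_pos[OF c d _ i _ ] h j have "(d = c \<and> j = Suc i) \<or> (d = rv c \<and> j = L c - Suc i)" by simp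
    then show "d = c \<and> j = Suc i"
    proof
      assume h2: "d = rv c \<and> j = L c - Suc i"
      then have "W d (Suc j) = W c (L c - Suc j)" using W_rv[OF c, of "Suc j"] j L_rv[OF c] by simp
      also have "L c - Suc j = i" using h2 i by simp
      finally show ?thesis using h by simp
    qed
  next
    assume "d = c \<and> j = Suc i"
    then show "W d j = W c (Suc i) \<and> W d (Suc j) \<noteq> W c i" using W_distinct2[OF c _ i] by simp
  qed
  then show ?thesis unfolding Pnb_arc g by simp
qed

definition allowed :: "nat \<Rightarrow> nat \<Rightarrow> bool" where
  "allowed c d = ((c, d) \<in> {(0,0),(0,2),(1,1),(1,2),(2,3),(2,4),(3,3),(3,5),(4,4),(4,5),(5,0),(5,1)})"

lemma end_cond0:
  assumes c: "c < 6" and d: "d < 6"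
  shows "(W d 0 = W c (L c) \<and> W d (Suc 0) \<noteq> W c (L c - 1)) \<longleftrightarrow> allowed c d"
proof -
  have pk: "cb_path_vertex a (k - 2) < w" using a3 k2 by (auto simp: cb_path_vertex_def w_def)
  have km: "k - 1 - 1 = k - 2" by simp
  show ?thesis using six_cases[OF c] six_cases[OF d]
    apply (elim disjE)
    using a3 b3 k2
    apply (simp_all add: L_simps allowed_def W_simps cb_path_vertex_def w_def)
    apply arith+
    done
qed

lemma end_cond:
  assumes c: "c < 6" and d: "d < 6" and j: "j < L d"
  shows "(W d j = W c (L c) \<and> W d (Suc j) \<noteq> W c (L c - 1)) \<longleftrightarrow> (j = 0 \<and> allowed c d)"
proof (cases "j = 0")
  case True
  have pk: "cb_path_vertex a (k - 2) < w" using a3 k2 by (auto simp: cb_path_vertex_def w_def)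
  show ?thesis using end_cond0[OF c d] True by simp
next
  case False
  have "W d j \<noteq> W c (L c)"
  proof
    assume "W d j = W c (L c)"
    then have "W d j = 0 \<or> W d j = w" using W_end_cases[OF c] by simp
    then show False using W_zero[OF d j] W_w[OF d j] False by auto
  qed
  then show ?thesis using False by simp
qed

lemma trans_end:
  assumes c: "c < 6" and d: "d < 6" and j: "j < L d"
  shows "Pnb E (arc c (L c - 1)) (arc d j) = (if j = 0 \<and> allowed c d then 1 / 2 else 0)"
proof -
  have Lc: "Suc (L c - 1) = L c" using L_pos[OF c] by simp
  show ?thesis unfolding Pnb_arc Lc using end_cond[OF c d j] gdeg_end[OF c] by simp
qed

end

context cbl begin

definition ci :: "nat \<times> nat \<Rightarrow> nat \<times> nat" where
  "ci s = (THE p. fst p < 6 \<and> snd p < L (fst p) \<and> arc (fst p) (snd p) = s)"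

lemma ci_arc: assumes c: "c < 6" and i: "i < L c" shows "ci (arc c i) = (c, i)"
  unfolding ci_def
proof (rule the_equality)
  show "fst (c, i) < 6 \<and> snd (c, i) < L (fst (c, i)) \<and> arc (fst (c, i)) (snd (c, i)) = arc c i" using c i by simp
next
  fix p assume "fst p < 6 \<and> snd p < L (fst p) \<and> arc (fst p) (snd p) = arc c i"
  then show "p = (c, i)" using arc_inj[OF _ c _ i] by (cases p) auto
qed

definition rr :: "nat \<times> nat \<Rightarrow> nat" where "rr s = L (fst (ci s)) - snd (ci s)"
definition ee :: "nat \<times> nat \<Rightarrow> nat \<times> nat" where "ee s = arc (fst (ci s)) (L (fst (ci s)) - 1)"
definition nx :: "nat \<times> nat \<Rightarrow> nat \<times> nat" where "nx s = arc (fst (ci s)) (Suc (snd (ci s)))"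

lemma rr_arc: "c < 6 \<Longrightarrow> i < L c \<Longrightarrow> rr (arc c i) = L c - i" by (simp add: rr_def ci_arc)
lemma ee_arc: "c < 6 \<Longrightarrow> i < L c \<Longrightarrow> ee (arc c i) = arc c (L c - 1)" by (simp add: ee_def ci_arc)
lemma nx_arc: "c < 6 \<Longrightarrow> i < L c \<Longrightarrow> nx (arc c i) = arc c (Suc i)" by (simp add: nx_def ci_arc)

abbreviation S where "S \<equiv> arcs E"

lemma S_arc: "s \<in> S \<Longrightarrow> \<exists>c i. c < 6 \<and> i < L c \<and> s = arc c i"
  unfolding arcs_E by blast

lemma arc_S: "c < 6 \<Longrightarrow> i < L c \<Longrightarrow> arc c i \<in> S"
  unfolding arcs_E by blast

lemma finite_S: "finite S"
proof -
  have "S = (\<lambda>(c, i). arc c i) ` (SIGMA c:{..<6}. {..<L c})" unfolding arcs_E by auto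
  then show ?thesis by simp
qed

lemma card_S: "card S = 2 * a + 2 * b + 2 * (k - 1)"
proof -
  have eq: "S = (\<lambda>(c, i). arc c i) ` (SIGMA c:{..<6}. {..<L c})" unfolding arcs_E by auto
  have inj: "inj_on (\<lambda>(c, i). arc c i) (SIGMA c:{..<6}. {..<L c})"
    by (rule inj_onI) (use arc_inj in auto)
  have "card S = card (SIGMA c:{..<6}. {..<L c})" unfolding eq by (rule card_image[OF inj])
  also have "\<dots> = (\<Sum>c<6. L c)" by (simp add: card_SigmaI)
  also have "\<dots> = 2 * a + 2 * b + 2 * (k - 1)" by (simp add: eval_nat_numeral L_def)
  finally show ?thesis .
qed

definition js :: "(nat \<times> nat) list" where
  "js = [arc 0 0, arc 1 0, arc 2 0, arc 3 0, arc 4 0, arc 5 0]"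

lemma js_nth: "i < 6 \<Longrightarrow> js ! i = arc i 0"
  unfolding js_def using six_cases[of i] by auto

lemma len_js: "length js = 6" by (simp add: js_def)

lemma set_js: "set js = {arc c 0 | c. c < 6}"
proof -
  have "set js = {js ! i | i. i < length js}" by (rule set_conv_nth)
  also have "\<dots> = {arc c 0 | c. c < 6}"
  proof (intro Set.set_eqI iffI)
    fix p assume "p \<in> {js ! i | i. i < length js}"
    then obtain i where "i < 6" "p = js ! i" using len_js by auto
    then show "p \<in> {arc c 0 | c. c < 6}" using js_nth by auto
  next
    fix p assume "p \<in> {arc c 0 | c. c < 6}"
    then obtain c where c: "c < 6" "p = arc c 0" by auto
    then have "p = js ! c" using js_nth by simp
    then show "p \<in> {js ! i | i. i < length js}" using c len_js by auto
  qed
  finally show ?thesis .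
qed

lemma distinct_js: "distinct js"
proof -
  have "inj_on (\<lambda>c. arc c 0) {..<6}"
  proof (rule inj_onI)
    fix x y assume x: "x \<in> {..<(6::nat)}" and y: "y \<in> {..<(6::nat)}" and e: "arc x 0 = arc y 0"
    then show "x = y" using arc_inj[of x y 0 0] L_pos[of x] L_pos[of y] by auto
  qed
  then have "distinct (map (\<lambda>c. arc c 0) [0..<6])" by (simp add: distinct_map lessThan_atLeast0)
  moreover have "map (\<lambda>c. arc c 0) [0..<6] = js" by (simp add: js_def eval_nat_numeral upt_rec)
  ultimately show ?thesis by simp
qed

lemma js_S: "set js \<subseteq> S" unfolding set_js using arc_S L_pos by blast

definition rs :: "(nat \<times> nat) list" where "rs = sorted_list_of_set (S - set js)"

definition bs :: "(nat \<times> nat) list" where "bs = js @ rs"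

lemma distinct_bs: "distinct bs"
  unfolding bs_def rs_def using distinct_js finite_S by auto

lemma set_bs: "set bs = S"
  unfolding bs_def rs_def using js_S finite_S by auto


lemma GB_val:
  assumes i: "i < 6" and j: "j < 6"
  shows "(\<lambda>s t. (if s = t then 1 else 0) - (inverse x) ^ rr s * Pnb E (ee s) t) (js ! i) (js ! j)
       = (if i = j then 1 else 0) - (if allowed i j then inverse x ^ L i / 2 else 0)"
proof -
  have Li: "0 < L i" "0 < L j" using L_pos i j by auto
  have eq: "(arc i 0 = arc j 0) = (i = j)" using arc_inj[OF i j Li] by auto
  show ?thesis unfolding js_nth[OF i] js_nth[OF j] rr_arc[OF i Li(1)] ee_arc[OF i Li(1)]
    trans_end[OF i j Li(2)] eq by simp
qed

lemma table6:
  assumes i: "i < 6" and j: "j < 6"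
  shows "(if i = j then 1 else 0) - (if allowed i j then inverse x ^ L i / 2 else 0) =
    [[1 - inverse x ^ a / 2, 0, - (inverse x ^ a / 2), 0, 0, 0],
     [0, 1 - inverse x ^ a / 2, - (inverse x ^ a / 2), 0, 0, 0],
     [0, 0, 1, - (inverse x ^ (k - 1) / 2), - (inverse x ^ (k - 1) / 2), 0],
     [0, 0, 0, 1 - inverse x ^ b / 2, 0, - (inverse x ^ b / 2)],
     [0, 0, 0, 0, 1 - inverse x ^ b / 2, - (inverse x ^ b / 2)],
     [- (inverse x ^ (k - 1) / 2), - (inverse x ^ (k - 1) / 2), 0, 0, 0, 1 :: complex]] ! i ! j"
  using six_cases[OF i] six_cases[OF j]
  by (elim disjE) (simp_all add: allowed_def L_simps)

lemma char_eval:
  assumes x0: "x \<noteq> 0"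
  shows "poly (char_poly (nb_matrix E)) x = x ^ card S *
     ((1 - inverse x ^ a / 2)^2 * (1 - inverse x ^ b / 2)^2 - 4 * (inverse x ^ (k - 1) / 2)^2 * (inverse x ^ a / 2)
       * (inverse x ^ b / 2) * (1 - inverse x ^ a / 2) * (1 - inverse x ^ b / 2))"
proof -
  let ?P = "Pnb E"
  define xs0 where "xs0 = sorted_list_of_set S"
  have dxs0: "distinct xs0" and sxs0: "set xs0 = S" unfolding xs0_def using finite_S by auto
  let ?Rm = "\<lambda>s t. (if s = t then x else 0) - (if 1 < rr s \<and> t = nx s then 1 else 0)"
  let ?Qm = "\<lambda>s t. (if s = t then 1 else 0) - (inverse x) ^ rr s * ?P (ee s) t"
  have 1: "poly (char_poly (nb_matrix E)) x = det (matL xs0 (\<lambda>s t. (if s = t then x else 0) - ?P s t))"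
    unfolding nb_matrix_matL xs0_def[symmetric] by (rule poly_char_poly_matL[OF dxs0])
  have 2: "det (matL xs0 (\<lambda>s t. (if s = t then x else 0) - ?P s t)) = det (matL bs (\<lambda>s t. (if s = t then x else 0) - ?P s t))"
    by (rule det_matL_perm[OF dxs0 distinct_bs]) (simp add: sxs0 set_bs)
  have fac: "matL bs (\<lambda>s t. (if s = t then x else 0) - ?P s t) = matL bs ?Rm * matL bs ?Qm"
  proof (rule matL_factor[OF distinct_bs x0])
    fix s assume "s \<in> set bs"
    then obtain c i where c: "c < 6" and i: "i < L c" and s: "s = arc c i" using S_arc set_bs by blast
    show "1 \<le> rr s" using s rr_arc[OF c i] i by simp
  next
    fix s assume "s \<in> set bs" and r1: "1 < rr s"
    then obtain c i where c: "c < 6" and i: "i < L c" and s: "s = arc c i" using S_arc set_bs by blast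
    have si: "Suc i < L c" using r1 rr_arc[OF c i] s by simp
    have "nx s \<in> set bs" unfolding s nx_arc[OF c i] set_bs using arc_S[OF c si] .
    moreover have "rr (nx s) = rr s - 1" unfolding s nx_arc[OF c i] rr_arc[OF c si] rr_arc[OF c i] by simp
    moreover have "ee (nx s) = ee s" unfolding s nx_arc[OF c i] ee_arc[OF c si] ee_arc[OF c i] ..
    moreover have "\<forall>t\<in>set bs. ?P s t = (if t = nx s then 1 else 0)"
    proof
      fix t assume "t \<in> set bs"
      then obtain d j where d: "d < 6" and j: "j < L d" and t: "t = arc d j" using S_arc set_bs by blast
      have "(arc d j = arc c (Suc i)) = (d = c \<and> j = Suc i)" using arc_inj[OF d c j si] by auto
      then show "?P s t = (if t = nx s then 1 else 0)"
        unfolding s t nx_arc[OF c i] trans_int[OF c si d j] by simp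
    qed
    ultimately show "nx s \<in> set bs \<and> rr (nx s) = rr s - 1 \<and> ee (nx s) = ee s \<and> (\<forall>t\<in>set bs. ?P s t = (if t = nx s then 1 else 0))"
      by blast
  next
    fix s assume "s \<in> set bs" and r1: "rr s = 1"
    then obtain c i where c: "c < 6" and i: "i < L c" and s: "s = arc c i" using S_arc set_bs by blast
    have "i = L c - 1" using r1 rr_arc[OF c i] s i by simp
    then show "ee s = s" unfolding s ee_arc[OF c i] by simp
  qed
  have 3: "det (matL bs (\<lambda>s t. (if s = t then x else 0) - ?P s t)) = det (matL bs ?Rm) * det (matL bs ?Qm)"
    unfolding fac by (rule det_mult[OF matL_carrier matL_carrier])
  have 4: "det (matL bs ?Rm) = x ^ length bs"
  proof (rule det_matL_rank[OF distinct_bs, where r = rr])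
    fix s assume "s \<in> set bs"
    then obtain c i where c: "c < 6" and i: "i < L c" and s: "s = arc c i" using S_arc set_bs by blast
    have "1 < rr s \<Longrightarrow> s \<noteq> nx s"
    proof
      assume "1 < rr s" "s = nx s"
      then have si: "Suc i < L c" using rr_arc[OF c i] s by simp
      have "arc c i = arc c (Suc i)" using \<open>s = nx s\<close> unfolding s nx_arc[OF c i] .
      then show False using arc_inj[OF c c i si] by simp
    qed
    then show "?Rm s s = x" by auto
  next
    fix s t assume s: "s \<in> set bs" and t: "t \<in> set bs" and st: "s \<noteq> t" and G: "?Rm s t \<noteq> 0"
    then have h: "1 < rr s" "t = nx s" by (auto split: if_splits)
    obtain c i where c: "c < 6" and i: "i < L c" and s': "s = arc c i" using S_arc set_bs s by blast
    have si: "Suc i < L c" using h rr_arc[OF c i] s' by simp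
    show "rr t < rr s" unfolding h(2) s' nx_arc[OF c i] rr_arc[OF c si] rr_arc[OF c i] using si by simp
  qed
  have 5: "det (matL bs ?Qm) = det (matL js ?Qm)"
    unfolding bs_def
  proof (rule det_matL_block)
    show "distinct (js @ rs)" using distinct_bs unfolding bs_def .
  next
    fix s t assume s: "s \<in> set (js @ rs)" and t: "t \<in> set rs"
    have tS: "t \<in> S" and tj: "t \<notin> set js" using t finite_S unfolding rs_def by auto
    obtain c i where c: "c < 6" and i: "i < L c" and s': "s = arc c i" using S_arc set_bs s unfolding bs_def by blast
    obtain d j where d: "d < 6" and j: "j < L d" and t': "t = arc d j" using S_arc tS by blast
    have "j \<noteq> 0"
    proof
      assume "j = 0"
      then have "t \<in> set js" unfolding set_js using t' d by blast
      then show False using tj by simp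
    qed
    then have "?P (ee s) t = 0" unfolding s' ee_arc[OF c i] t' trans_end[OF c d j] by simp
    then show "?Qm s t = (if s = t then 1 else 0)" by simp
  qed
  have 6: "matL js ?Qm = mat (Suc (Suc (Suc (Suc (Suc (Suc 0)))))) (Suc (Suc (Suc (Suc (Suc (Suc 0))))))
     (\<lambda>(i,j). [[1 - inverse x ^ a / 2, 0, - (inverse x ^ a / 2), 0, 0, 0],
     [0, 1 - inverse x ^ a / 2, - (inverse x ^ a / 2), 0, 0, 0],
     [0, 0, 1, - (inverse x ^ (k - 1) / 2), - (inverse x ^ (k - 1) / 2), 0],
     [0, 0, 0, 1 - inverse x ^ b / 2, 0, - (inverse x ^ b / 2)],
     [0, 0, 0, 0, 1 - inverse x ^ b / 2, - (inverse x ^ b / 2)],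
     [- (inverse x ^ (k - 1) / 2), - (inverse x ^ (k - 1) / 2), 0, 0, 0, 1 :: complex]] ! i ! j)"
  proof (rule eq_matI)
    fix i j assume "i < dim_row (mat (Suc (Suc (Suc (Suc (Suc (Suc 0)))))) (Suc (Suc (Suc (Suc (Suc (Suc 0)))))) (\<lambda>(i,j). [[1 - inverse x ^ a / 2, 0, - (inverse x ^ a / 2), 0, 0, 0],
     [0, 1 - inverse x ^ a / 2, - (inverse x ^ a / 2), 0, 0, 0],
     [0, 0, 1, - (inverse x ^ (k - 1) / 2), - (inverse x ^ (k - 1) / 2), 0],
     [0, 0, 0, 1 - inverse x ^ b / 2, 0, - (inverse x ^ b / 2)],
     [0, 0, 0, 0, 1 - inverse x ^ b / 2, - (inverse x ^ b / 2)],
     [- (inverse x ^ (k - 1) / 2), - (inverse x ^ (k - 1) / 2), 0, 0, 0, 1 :: complex]] ! i ! j))"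
      and "j < dim_col (mat (Suc (Suc (Suc (Suc (Suc (Suc 0)))))) (Suc (Suc (Suc (Suc (Suc (Suc 0)))))) (\<lambda>(i,j). [[1 - inverse x ^ a / 2, 0, - (inverse x ^ a / 2), 0, 0, 0],
     [0, 1 - inverse x ^ a / 2, - (inverse x ^ a / 2), 0, 0, 0],
     [0, 0, 1, - (inverse x ^ (k - 1) / 2), - (inverse x ^ (k - 1) / 2), 0],
     [0, 0, 0, 1 - inverse x ^ b / 2, 0, - (inverse x ^ b / 2)],
     [0, 0, 0, 0, 1 - inverse x ^ b / 2, - (inverse x ^ b / 2)],
     [- (inverse x ^ (k - 1) / 2), - (inverse x ^ (k - 1) / 2), 0, 0, 0, 1 :: complex]] ! i ! j))"
    then have i: "i < 6" and j: "j < 6" by auto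
    show "matL js ?Qm $$ (i, j) = mat (Suc (Suc (Suc (Suc (Suc (Suc 0)))))) (Suc (Suc (Suc (Suc (Suc (Suc 0)))))) (\<lambda>(i,j). [[1 - inverse x ^ a / 2, 0, - (inverse x ^ a / 2), 0, 0, 0],
     [0, 1 - inverse x ^ a / 2, - (inverse x ^ a / 2), 0, 0, 0],
     [0, 0, 1, - (inverse x ^ (k - 1) / 2), - (inverse x ^ (k - 1) / 2), 0],
     [0, 0, 0, 1 - inverse x ^ b / 2, 0, - (inverse x ^ b / 2)],
     [0, 0, 0, 0, 1 - inverse x ^ b / 2, - (inverse x ^ b / 2)],
     [- (inverse x ^ (k - 1) / 2), - (inverse x ^ (k - 1) / 2), 0, 0, 0, 1 :: complex]] ! i ! j) $$ (i, j)"
      using i j len_js GB_val[OF i j, of x] table6[OF i j, of x] by simp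
  qed (simp_all add: len_js)
  have lb: "length bs = card S" using distinct_card[OF distinct_bs] set_bs by simp
  show ?thesis unfolding 1 2 3 4 5 6 det6 lb ..
qed

end

lemma alg_id:
  fixes X Y Z :: complex
  assumes X: "X \<noteq> 0" and Y: "Y \<noteq> 0" and Z: "Z \<noteq> 0"
  shows "X^2 * Y^2 * Z^2 * ((1 - inverse X / 2)^2 * (1 - inverse Y / 2)^2 - 4 * (inverse Z / 2)^2 * (inverse X / 2)
       * (inverse Y / 2) * (1 - inverse X / 2) * (1 - inverse Y / 2))
     = (X - 1/2) * (Y - 1/2) * (Z^2 * (X - 1/2) * (Y - 1/2) - 1/4)"
  using X Y Z by (simp add: field_simps power2_eq_square)

context cbl begin

lemma charpoly_cb: "char_poly (nb_matrix E) = hpol a * hpol b * gpol (2 * k - 2) a b"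
proof -
  let ?p = "char_poly (nb_matrix E) - hpol a * hpol b * gpol (2 * k - 2) a b"
  have ev: "poly ?p x = 0" if x0: "x \<noteq> 0" for x
  proof -
    have X: "x ^ a \<noteq> 0" "x ^ b \<noteq> 0" "x ^ (k - 1) \<noteq> 0" using x0 by auto
    have e1: "x ^ card S = (x ^ a)^2 * (x ^ b)^2 * (x ^ (k - 1))^2"
      unfolding card_S by (simp add: power_add power_mult[symmetric] mult.commute)
    have e2: "x ^ (2 * k - 2) = (x ^ (k - 1))^2"
    proof -
      have "2 * k - 2 = (k - 1) * 2" by simp
      then show ?thesis by (simp add: power_mult)
    qed
    have "poly (char_poly (nb_matrix E)) x = (x ^ a - 1/2) * (x ^ b - 1/2) * ((x ^ (k - 1))^2 * (x ^ a - 1/2) * (x ^ b - 1/2) - 1/4)"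
      unfolding char_eval[OF x0] e1 power_inverse using alg_id[OF X] .
    moreover have "poly (hpol a * hpol b * gpol (2 * k - 2) a b) x = (x ^ a - 1/2) * (x ^ b - 1/2) * ((x ^ (k - 1))^2 * (x ^ a - 1/2) * (x ^ b - 1/2) - 1/4)"
      unfolding e2[symmetric] by (simp add: hpol_def gpol_def poly_monom)
    ultimately show ?thesis by simp
  qed
  have "?p = 0"
  proof (rule ccontr)
    assume "?p \<noteq> 0"
    then have "finite {x. poly ?p x = 0}" by (rule poly_roots_finite)
    moreover have "- {0} \<subseteq> {x. poly ?p x = 0}" using ev by auto
    ultimately have "finite (- {0::complex})" by (rule finite_subset[rotated])
    then show False by (simp add: Compl_eq_Diff_UNIV infinite_UNIV_char_0)
  qed
  then show ?thesis by simp
qed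

lemma kemeny_cb: "kemeny_nb E = complex_of_real (2 * (real a + real b) +
   ((real a + real b + real k - 1)^2 - (real a + real b + real k - 1) / 2 - (real a + real b)^2 / 2 + real a * real b)
     / (real a + real b + real k - 1))"
proof -
  have K: "kemeny_nb E = 2 * of_nat a + 2 * of_nat b +
     (of_nat (2 * k - 2) * (of_nat (2 * k - 2) - 1) / 4 + of_nat a * (of_nat a - 1) / 2 + of_nat b * (of_nat b - 1) / 2
   + of_nat (2 * k - 2) * of_nat a + of_nat (2 * k - 2) * of_nat b + 2 * of_nat a * of_nat b) / (2 * (of_nat (2 * k - 2) / 4 + (of_nat a + of_nat b) / 2))"
    unfolding kemeny_nb_def by (rule kemeny_from_poly[OF charpoly_cb]) (use a3 in simp)
  have m: "(of_nat (2 * k - 2) :: complex) = of_real (2 * real k - 2)" using k2 by (simp add: of_nat_diff)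
  have t: "real a + real b + real k - 1 > 0" using a3 by simp
  have "kemeny_nb E = complex_of_real (2 * real a + 2 * real b +
     ((2 * real k - 2) * ((2 * real k - 2) - 1) / 4 + real a * (real a - 1) / 2 + real b * (real b - 1) / 2
   + (2 * real k - 2) * real a + (2 * real k - 2) * real b + 2 * real a * real b) / (2 * ((2 * real k - 2) / 4 + (real a + real b) / 2)))"
    unfolding K m by simp
  also have "2 * real a + 2 * real b +
     ((2 * real k - 2) * ((2 * real k - 2) - 1) / 4 + real a * (real a - 1) / 2 + real b * (real b - 1) / 2
   + (2 * real k - 2) * real a + (2 * real k - 2) * real b + 2 * real a * real b) / (2 * ((2 * real k - 2) / 4 + (real a + real b) / 2))
    = 2 * (real a + real b) +
   ((real a + real b + real k - 1)^2 - (real a + real b + real k - 1) / 2 - (real a + real b)^2 / 2 + real a * real b)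
     / (real a + real b + real k - 1)"
    using t by (simp add: field_simps power2_eq_square)
  finally show ?thesis .
qed

end

lemma kemeny_cb_n:
  assumes "a \<ge> 3" "b \<ge> 3" "k \<ge> 2" "a + b + k - 2 = n"
  shows "kemeny_nb (cb_edges k a b) = complex_of_real (2 * (real a + real b) +
   ((real n + 1)^2 - (real n + 1) / 2 - (real a + real b)^2 / 2 + real a * real b) / (real n + 1))"
proof -
  interpret cbl k a b using assms by unfold_locales auto
  have e: "real a + real b + real k - 1 = real n + 1" using assms by (simp add: of_nat_diff[symmetric])
  show ?thesis using kemeny_cb unfolding e .
qed

lemma ab_bound: "4 * (int a * int b) \<le> (int a + int b)^2"
proof -
  have "0 \<le> (int a - int b)^2" by simp
  then show ?thesis by (simp add: power2_eq_square algebra_simps)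
qed

lemma ab_le_half:
  fixes a b n :: nat
  assumes "a + b = n"
  shows "int a * int b \<le> int ((n + 1) div 2) * int (n div 2)"
proof (cases "even n")
  case True
  then obtain q where q: "n = 2 * q" by (auto elim: evenE)
  have "(n + 1) div 2 = q" "n div 2 = q" using q by auto
  moreover have "int a + int b = 2 * int q" using assms q by simp
  then have "4 * (int a * int b) \<le> (2 * int q)^2" using ab_bound[of a b] by simp
  then have "4 * (int a * int b) \<le> 4 * (int q * int q)" by (simp add: power2_eq_square)
  then have "int a * int b \<le> int q * int q" by simp
  ultimately show ?thesis by simp
next
  case False
  then obtain q where q: "n = 2 * q + 1" by (auto elim: oddE)
  have h: "(n + 1) div 2 = q + 1" "n div 2 = q" using q by auto
  have "int a + int b = 2 * int q + 1" using assms q by simp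
  then have "4 * (int a * int b) \<le> (2 * int q + 1)^2" using ab_bound[of a b] by simp
  also have "(2 * int q + 1)^2 = 4 * (int q * int q + int q) + 1" by (simp add: power2_eq_square algebra_simps)
  finally have h4: "4 * (int a * int b) \<le> 4 * (int q * int q + int q) + 1" .
  have gen: "\<And>X Y :: int. 4 * X \<le> 4 * Y + 1 \<Longrightarrow> X \<le> Y" by presburger
  have "int a * int b \<le> int q * int q + int q" by (rule gen[OF h4])
  then show ?thesis unfolding h by (simp add: algebra_simps)
qed

lemma half_prod_lower:
  fixes n :: nat
  shows "int n ^ 2 - 1 \<le> 4 * (int ((n + 1) div 2) * int (n div 2))"
proof (cases "even n")
  case True
  then obtain q where q: "n = 2 * q" by (auto elim: evenE)
  then show ?thesis by (simp add: power2_eq_square algebra_simps)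
next
  case False
  then obtain q where q: "n = 2 * q + 1" by (auto elim: oddE)
  have h: "(n + 1) div 2 = q + 1" "n div 2 = q" using q by auto
  show ?thesis unfolding h q by (simp add: power2_eq_square algebra_simps)
qed

lemma main_ineq:
  fixes a b k n :: nat
  assumes "k \<ge> 2" "a + b + k - 2 = n"
  shows "8 * int (a + b) * int (n + 1) - 2 * int (a + b)^2 + 4 * (int a * int b)
     \<le> 8 * int n * int (n + 1) - 2 * int n ^ 2 + 4 * (int ((n + 1) div 2) * int (n div 2))"
proof (cases "a + b = n")
  case True
  show ?thesis using ab_le_half[OF True] True by simp
next
  case False
  define s where "s = a + b"
  have sn: "s < n" using assms False unfolding s_def by simp
  have 1: "1 \<le> int n - int s" using sn by simp
  have 2: "1 \<le> 8 * int (n + 1) - int n - int s" using sn by simp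
  have "1 * 1 \<le> (int n - int s) * (8 * int (n + 1) - int n - int s)"
    by (rule mult_mono[OF 1 2]) (use 1 in auto)
  then have p: "1 \<le> 8 * int n * int (n + 1) - int n ^ 2 - (8 * int s * int (n + 1) - int s ^ 2)"
    by (simp add: power2_eq_square algebra_simps)
  have ab: "4 * (int a * int b) \<le> int s ^ 2" using ab_bound[of a b] unfolding s_def by simp
  have hl: "int n ^ 2 - 1 \<le> 4 * (int ((n + 1) div 2) * int (n div 2))" by (rule half_prod_lower)
  show ?thesis using p ab hl unfolding s_def[symmetric] by linarith
qed

theorem theorem5p7:
  fixes n :: nat
  assumes "n \<ge> 6"
  shows "(\<forall>k a b. a \<ge> 3 \<and> b \<ge> 3 \<and> k \<ge> 2 \<and> a + b + k - 2 = n \<longrightarrow>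
            Re (kemeny_nb (cb_edges k a b)) \<le> Re (kemeny_nb (cb_edges 2 ((n + 1) div 2) (n div 2))))
       \<and> (even n \<longrightarrow> kemeny_nb (cb_edges 2 (n div 2) (n div 2))
              = complex_of_real ((11 * real n ^ 2 + 14 * real n + 2) / (4 * (real n + 1))))
       \<and> (odd n \<longrightarrow> kemeny_nb (cb_edges 2 ((n + 1) div 2) ((n - 1) div 2))
              = complex_of_real ((11 * real n ^ 2 + 14 * real n + 1) / (4 * (real n + 1))))"
proof -
  define Kf where "Kf s p = 2 * s + ((real n + 1)^2 - (real n + 1) / 2 - s^2 / 2 + p) / (real n + 1)" for s p :: real
  define a0 where "a0 = (n + 1) div 2"
  define b0 where "b0 = n div 2"
  have a0: "a0 \<ge> 3" and b0: "b0 \<ge> 3" and ab0: "a0 + b0 + 2 - 2 = n" using assms unfolding a0_def b0_def by auto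
  have K0: "kemeny_nb (cb_edges 2 a0 b0) = complex_of_real (Kf (real n) (real a0 * real b0))"
  proof -
    have "real a0 + real b0 = real n" using ab0 by (metis add_diff_cancel_right' of_nat_add)
    then show ?thesis using kemeny_cb_n[OF a0 b0 _ ab0] unfolding Kf_def by simp
  qed
  have t0: "real n + 1 > 0" by simp
  have P1: "Re (kemeny_nb (cb_edges k a b)) \<le> Re (kemeny_nb (cb_edges 2 a0 b0))"
    if h: "a \<ge> 3" "b \<ge> 3" "k \<ge> 2" "a + b + k - 2 = n" for k a b
  proof -
    have Kab: "kemeny_nb (cb_edges k a b) = complex_of_real (Kf (real a + real b) (real a * real b))"
      using kemeny_cb_n[OF h] unfolding Kf_def by simp
    have I: "8 * int (a + b) * int (n + 1) - 2 * int (a + b)^2 + 4 * (int a * int b)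
       \<le> 8 * int n * int (n + 1) - 2 * int n ^ 2 + 4 * (int a0 * int b0)"
      using main_ineq[OF h(3,4)] unfolding a0_def b0_def .
    then have IR: "8 * (real a + real b) * (real n + 1) - 2 * (real a + real b)^2 + 4 * (real a * real b)
       \<le> 8 * real n * (real n + 1) - 2 * real n ^ 2 + 4 * (real a0 * real b0)"
    proof -
      have "real_of_int (8 * int (a + b) * int (n + 1) - 2 * int (a + b)^2 + 4 * (int a * int b))
        \<le> real_of_int (8 * int n * int (n + 1) - 2 * int n ^ 2 + 4 * (int a0 * int b0))"
        using I by (simp only: of_int_le_iff)
      then show ?thesis by (simp add: add.commute)
    qed
    have KfE: "Kf s p = (8 * s * (real n + 1) + (4 * (real n + 1)^2 - 2 * (real n + 1)) - 2 * s^2 + 4 * p) / (4 * (real n + 1))" for s p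
      unfolding Kf_def using t0 by (simp add: field_simps power2_eq_square)
    have num: "8 * (real a + real b) * (real n + 1) + (4 * (real n + 1)^2 - 2 * (real n + 1)) - 2 * (real a + real b)^2 + 4 * (real a * real b)
       \<le> 8 * real n * (real n + 1) + (4 * (real n + 1)^2 - 2 * (real n + 1)) - 2 * real n ^ 2 + 4 * (real a0 * real b0)"
      using IR by linarith
    have "Kf (real a + real b) (real a * real b) \<le> Kf (real n) (real a0 * real b0)"
      unfolding KfE by (rule divide_right_mono[OF num]) (use t0 in simp)
    then show ?thesis unfolding Kab K0 by simp
  qed
  have P2: "kemeny_nb (cb_edges 2 (n div 2) (n div 2))
              = complex_of_real ((11 * real n ^ 2 + 14 * real n + 2) / (4 * (real n + 1)))" if ev: "even n"
  proof -
    obtain q where q: "n = 2 * q" using ev by (auto elim: evenE)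
    have e: "a0 = n div 2" "b0 = n div 2" unfolding a0_def b0_def using q by auto
    have "Kf (real n) (real a0 * real b0) = (11 * real n ^ 2 + 14 * real n + 2) / (4 * (real n + 1))"
      unfolding Kf_def e using q t0 by (simp add: field_simps power2_eq_square)
    then show ?thesis using K0 e by simp
  qed
  have P3: "kemeny_nb (cb_edges 2 ((n + 1) div 2) ((n - 1) div 2))
              = complex_of_real ((11 * real n ^ 2 + 14 * real n + 1) / (4 * (real n + 1)))" if od: "odd n"
  proof -
    obtain q where q: "n = 2 * q + 1" using od by (auto elim: oddE)
    have e: "a0 = (n + 1) div 2" "b0 = (n - 1) div 2" "a0 = q + 1" "b0 = q" unfolding a0_def b0_def using q by auto
    have "Kf (real n) (real a0 * real b0) = (11 * real n ^ 2 + 14 * real n + 1) / (4 * (real n + 1))"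
      unfolding Kf_def e(3,4) using q t0 by (simp add: field_simps power2_eq_square)
    then show ?thesis using K0 e(1,2) by simp
  qed
  show ?thesis using P1 P2 P3 unfolding a0_def b0_def by blast
qed

end
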